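(* Let $n>2$ and $G_n=BS(1,n)=\langle a,b\mid bab^{-1}=a^n\rangle$. Then for every $k>0$, $G_n$ is not $k$-chordal with respect to the generating set $\{a,b\}$.
   Context: For a group $G$ with finite generating set $S$, $S^{\pm1}=S\cup S^{-1}\setminus\{e\}$. A relation $s_1\cdots s_n=e$ with $n>2$, $s_i\in S^{\pm1}$, is simple if $s_p\cdots s_q=e$ holds exactly when $(p,q)=(1,n)$. $G$ is $k$-chordal with respect to $S$ if for every simple relation $s_1\cdots s_n=e$ with $n\ge k$ there exist $1\le i<j\le n$ and $s'_1,\dots,s'_r\in S^{\pm1}$ with $s_i\cdots s_j=s'_1\cdots s'_r$ and $r\le\min\{j-i,\,n-j+i-2\}$ (equivalently, every cycle of length at least $k$ in $Cay(G,S)$ has a shortcut). *)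

theory Defs
  imports Complex_Main "HOL-Algebra.Group" "HOL-Algebra.Generated_Groups"
begin

definition sym_gens :: "('a, 'b) monoid_scheme \<Rightarrow> 'a set \<Rightarrow> 'a set" where
  "sym_gens G S = (S \<union> m_inv G ` S) - {\<one>\<^bsub>G\<^esub>}"

definition word_prod :: "('a, 'b) monoid_scheme \<Rightarrow> 'a list \<Rightarrow> 'a" where
  "word_prod G ws = foldr (\<lambda>x y. x \<otimes>\<^bsub>G\<^esub> y) ws \<one>\<^bsub>G\<^esub>"

text \<open>The subword s_p ... s_q (1-based indices, p \<le> q).\<close>
definition subword :: "'a list \<Rightarrow> nat \<Rightarrow> nat \<Rightarrow> 'a list" where
  "subword ws p q = take (Suc q - p) (drop (p - 1) ws)"

definition simple_relation :: "('a, 'b) monoid_scheme \<Rightarrow> 'a set \<Rightarrow> 'a list \<Rightarrow> bool" where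
  "simple_relation G S ws \<longleftrightarrow>
     length ws > 2 \<and> set ws \<subseteq> sym_gens G S \<and>
     (\<forall>p q. 1 \<le> p \<and> p \<le> q \<and> q \<le> length ws \<longrightarrow>
        (word_prod G (subword ws p q) = \<one>\<^bsub>G\<^esub> \<longleftrightarrow> (p = 1 \<and> q = length ws)))"

text \<open>Bounds are computed in int so that n - j + i - 2 is not truncated.\<close>
definition k_chordal :: "('a, 'b) monoid_scheme \<Rightarrow> 'a set \<Rightarrow> nat \<Rightarrow> bool" where
  "k_chordal G S k \<longleftrightarrow>
     (\<forall>ws. simple_relation G S ws \<and> length ws \<ge> k \<longrightarrow>
        (\<exists>i j ws'. 1 \<le> i \<and> i < j \<and> j \<le> length ws \<and> set ws' \<subseteq> sym_gens G S \<and>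
            word_prod G (subword ws i j) = word_prod G ws' \<and>
            int (length ws') \<le> min (int j - int i) (int (length ws) - int j + int i - 2)))"

text \<open>Affine group of Q: (r,t) is the map x \<mapsto> r*x + t, product = composition.\<close>
definition affQ :: "(rat \<times> rat) monoid" where
  "affQ = \<lparr>carrier = {(r, t). r \<noteq> 0},
           monoid.mult = (\<lambda>(r1, t1) (r2, t2). (r1 * r2, r1 * t2 + t1)),
           one = (1, 0)\<rparr>"

definition bs_a :: "rat \<times> rat" where "bs_a = (1, 1)"
definition bs_b :: "nat \<Rightarrow> rat \<times> rat" where "bs_b n = (of_nat n, 0)"

text \<open>BS(1,n) realised faithfully as the subgroup of the affine group of Q generated by
  a : x \<mapsto> x + 1 and b : x \<mapsto> n x (indeed b a b^{-1} = a^n).\<close>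
definition BS :: "nat \<Rightarrow> (rat \<times> rat) monoid" where
  "BS n = affQ\<lparr>carrier := generate affQ {bs_a, bs_b n}\<rparr>"

end

theory Submission
  imports Defs
begin

definition mulp :: "rat \<times> rat \<Rightarrow> rat \<times> rat \<Rightarrow> rat \<times> rat" where
  "mulp x y = (fst x * fst y, fst x * snd y + snd x)"

lemma BS_mult[simp]: "monoid.mult (BS n) = mulp"
  by (auto simp: BS_def affQ_def mulp_def fun_eq_iff split: prod.splits)

lemma BS_one[simp]: "one (BS n) = (1, 0)"
  by (simp add: BS_def affQ_def)

lemma affQ_group: "group affQ"
proof (rule groupI)
  show "\<And>x y. x \<in> carrier affQ \<Longrightarrow> y \<in> carrier affQ \<Longrightarrow> x \<otimes>\<^bsub>affQ\<^esub> y \<in> carrier affQ"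
    by (auto simp: affQ_def)
  show "\<one>\<^bsub>affQ\<^esub> \<in> carrier affQ" by (simp add: affQ_def)
  show "\<And>x y z. x \<in> carrier affQ \<Longrightarrow> y \<in> carrier affQ \<Longrightarrow> z \<in> carrier affQ \<Longrightarrow>
      x \<otimes>\<^bsub>affQ\<^esub> y \<otimes>\<^bsub>affQ\<^esub> z = x \<otimes>\<^bsub>affQ\<^esub> (y \<otimes>\<^bsub>affQ\<^esub> z)"
    by (auto simp: affQ_def algebra_simps)
  show "\<And>x. x \<in> carrier affQ \<Longrightarrow> \<one>\<^bsub>affQ\<^esub> \<otimes>\<^bsub>affQ\<^esub> x = x"
    by (auto simp: affQ_def)
  show "\<And>x. x \<in> carrier affQ \<Longrightarrow> \<exists>y\<in>carrier affQ. y \<otimes>\<^bsub>affQ\<^esub> x = \<one>\<^bsub>affQ\<^esub>"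
  proof -
    fix x assume "x \<in> carrier affQ"
    then obtain r t where x: "x = (r, t)" "r \<noteq> 0" by (auto simp: affQ_def)
    show "\<exists>y\<in>carrier affQ. y \<otimes>\<^bsub>affQ\<^esub> x = \<one>\<^bsub>affQ\<^esub>"
      by (rule bexI[of _ "(1/r, - t/r)"]) (use x in \<open>auto simp: affQ_def\<close>)
  qed
qed

lemma gens_sub: "n > 0 \<Longrightarrow> {bs_a, bs_b n} \<subseteq> carrier affQ"
  by (auto simp: affQ_def bs_a_def bs_b_def)

lemma BS_inv:
  assumes "n > 0" "x \<in> {bs_a, bs_b n}"
  shows "m_inv (BS n) x = m_inv affQ x"
proof -
  have sg: "subgroup (generate affQ {bs_a, bs_b n}) affQ"
    using group.generate_is_subgroup[OF affQ_group gens_sub[OF assms(1)]] .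
  have "x \<in> generate affQ {bs_a, bs_b n}" using assms(2) by (auto intro: generate.incl)
  then show ?thesis unfolding BS_def using group.m_inv_consistent[OF affQ_group sg] by simp
qed

lemma inv_affQ:
  assumes "r \<noteq> 0" shows "m_inv affQ (r, t) = (1/r, - t/r)"
proof -
  have "(1/r, - t/r) \<otimes>\<^bsub>affQ\<^esub> (r, t) = \<one>\<^bsub>affQ\<^esub>" "(r, t) \<otimes>\<^bsub>affQ\<^esub> (1/r, - t/r) = \<one>\<^bsub>affQ\<^esub>"
    using assms by (auto simp: affQ_def)
  moreover have "(1/r, - t/r) \<in> carrier affQ" "(r,t) \<in> carrier affQ" using assms by (auto simp: affQ_def)
  ultimately show ?thesis using group.inv_equality[OF affQ_group] by metis
qed

definition "gA = ((1::rat), (-1::rat))"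
definition "gB n = (1 / (of_nat n::rat), (0::rat))"

lemma sym_gens_BS:
  assumes "n > 1"
  shows "sym_gens (BS n) {bs_a, bs_b n} = {bs_a, gA, bs_b n, gB n}"
proof -
  have i1: "m_inv (BS n) bs_a = gA"
    using BS_inv[of n bs_a] assms inv_affQ[of 1 1] by (simp add: bs_a_def gA_def)
  have i2: "m_inv (BS n) (bs_b n) = gB n"
    using BS_inv[of n "bs_b n"] assms inv_affQ[of "of_nat n" 0] by (simp add: bs_b_def gB_def)
  have ne: "bs_a \<noteq> (1,0)" "gA \<noteq> (1,0)" "bs_b n \<noteq> (1,0)" "gB n \<noteq> (1,0)"
    using assms by (auto simp: bs_a_def bs_b_def gA_def gB_def)
  show ?thesis unfolding sym_gens_def using ne by (auto simp: i1 i2)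
qed

lemma mulp_assoc: "mulp x (mulp y z) = mulp (mulp x y) z"
  by (simp add: mulp_def algebra_simps)

lemma mulp_one[simp]: "mulp x (1,0) = x" "mulp (1,0) x = x"
  by (simp_all add: mulp_def)

definition wp :: "(rat \<times> rat) list \<Rightarrow> rat \<times> rat" where
  "wp ws = foldr mulp ws (1,0)"

lemma word_prod_BS: "word_prod (BS n) ws = wp ws"
  by (simp add: word_prod_def wp_def)

lemma wp_Cons[simp]: "wp (x # xs) = mulp x (wp xs)" and wp_Nil[simp]: "wp [] = (1,0)"
  by (simp_all add: wp_def)

lemma wp_append: "wp (xs @ ys) = mulp (wp xs) (wp ys)"
  by (induction xs) (simp_all add: mulp_assoc)

definition tsum :: "nat \<Rightarrow> (int \<times> int) list \<Rightarrow> rat" where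
  "tsum n ps = sum_list (map (\<lambda>p. of_int (fst p) * (of_nat n) powi (snd p)) ps)"

lemma tsum_Nil[simp]: "tsum n [] = 0" and tsum_Cons[simp]: "tsum n (p # ps) = of_int (fst p) * (of_nat n) powi (snd p) + tsum n ps"
  by (simp_all add: tsum_def)

lemma walk:
  assumes n: "n > 1" and w: "set w \<subseteq> {bs_a, gA, bs_b n, gB n}"
  shows "\<exists>e' L M kb ps. mulp ((of_nat n) powi e, t) (wp w) = ((of_nat n) powi e', t + tsum n ps)
     \<and> L \<le> e \<and> e \<le> M \<and> L \<le> e' \<and> e' \<le> M \<and> kb + length ps = length w
     \<and> 2*(M-L) - \<bar>e-e'\<bar> \<le> int kb \<and> (\<forall>p\<in>set ps. (fst p = 1 \<or> fst p = -1) \<and> L \<le> snd p \<and> snd p \<le> M)"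
  using w
proof (induction w arbitrary: e t)
  case Nil
  show ?case by (rule exI[of _ e], rule exI[of _ e], rule exI[of _ e], rule exI[of _ 0], rule exI[of _ "[]"]) simp
next
  case (Cons s w)
  have sw: "set w \<subseteq> {bs_a, gA, bs_b n, gB n}" using Cons.prems by simp
  have s: "s \<in> {bs_a, gA, bs_b n, gB n}" using Cons.prems by simp
  have N0: "(of_nat n::rat) \<noteq> 0" using n by simp
  have eq: "mulp ((of_nat n) powi e, t) (wp (s # w)) = mulp (mulp ((of_nat n) powi e, t) s) (wp w)"
    by (simp add: mulp_assoc)
  consider "s = bs_a" | "s = gA" | "s = bs_b n" | "s = gB n" using s by blast
  then show ?case
  proof cases
    case 1
    have m: "mulp ((of_nat n) powi e, t) s = ((of_nat n) powi e, t + of_int 1 * (of_nat n) powi e)"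
      by (simp add: 1 bs_a_def mulp_def)
    obtain e' L M kb ps where H: "mulp ((of_nat n) powi e, t + of_int 1 * (of_nat n) powi e) (wp w) = ((of_nat n) powi e', (t + of_int 1 * (of_nat n) powi e) + tsum n ps)"
      "L \<le> e" "e \<le> M" "L \<le> e'" "e' \<le> M" "kb + length ps = length w"
      "2*(M-L) - \<bar>e-e'\<bar> \<le> int kb" "\<forall>p\<in>set ps. (fst p = 1 \<or> fst p = -1) \<and> L \<le> snd p \<and> snd p \<le> M"
      using Cons.IH[OF sw] by blast
    show ?thesis
      by (rule exI[of _ e'], rule exI[of _ L], rule exI[of _ M], rule exI[of _ kb], rule exI[of _ "(1,e) # ps"])
        (use H in \<open>unfold eq m, auto simp: algebra_simps\<close>)
  next
    case 2
    have m: "mulp ((of_nat n) powi e, t) s = ((of_nat n) powi e, t + of_int (-1) * (of_nat n) powi e)"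
      by (simp add: 2 gA_def mulp_def)
    obtain e' L M kb ps where H: "mulp ((of_nat n) powi e, t + of_int (-1) * (of_nat n) powi e) (wp w) = ((of_nat n) powi e', (t + of_int (-1) * (of_nat n) powi e) + tsum n ps)"
      "L \<le> e" "e \<le> M" "L \<le> e'" "e' \<le> M" "kb + length ps = length w"
      "2*(M-L) - \<bar>e-e'\<bar> \<le> int kb" "\<forall>p\<in>set ps. (fst p = 1 \<or> fst p = -1) \<and> L \<le> snd p \<and> snd p \<le> M"
      using Cons.IH[OF sw] by blast
    show ?thesis
      by (rule exI[of _ e'], rule exI[of _ L], rule exI[of _ M], rule exI[of _ kb], rule exI[of _ "(-1,e) # ps"])
        (use H in \<open>unfold eq m, auto simp: algebra_simps\<close>)
  next
    case 3
    have m: "mulp ((of_nat n) powi e, t) s = ((of_nat n) powi (e+1), t)"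
      using N0 by (simp add: 3 bs_b_def mulp_def power_int_add_1)
    obtain e' L M kb ps where H: "mulp ((of_nat n) powi (e+1), t) (wp w) = ((of_nat n) powi e', t + tsum n ps)"
      "L \<le> e+1" "e+1 \<le> M" "L \<le> e'" "e' \<le> M" "kb + length ps = length w"
      "2*(M-L) - \<bar>e+1-e'\<bar> \<le> int kb" "\<forall>p\<in>set ps. (fst p = 1 \<or> fst p = -1) \<and> L \<le> snd p \<and> snd p \<le> M"
      using Cons.IH[OF sw] by blast
    show ?thesis
      by (rule exI[of _ e'], rule exI[of _ "min L e"], rule exI[of _ M], rule exI[of _ "Suc kb"], rule exI[of _ ps])
        (use H in \<open>unfold eq m, auto\<close>)
  next
    case 4
    have m: "mulp ((of_nat n) powi e, t) s = ((of_nat n) powi (e-1), t)"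
      using N0 by (simp add: 4 gB_def mulp_def power_int_diff)
    obtain e' L M kb ps where H: "mulp ((of_nat n) powi (e-1), t) (wp w) = ((of_nat n) powi e', t + tsum n ps)"
      "L \<le> e-1" "e-1 \<le> M" "L \<le> e'" "e' \<le> M" "kb + length ps = length w"
      "2*(M-L) - \<bar>e-1-e'\<bar> \<le> int kb" "\<forall>p\<in>set ps. (fst p = 1 \<or> fst p = -1) \<and> L \<le> snd p \<and> snd p \<le> M"
      using Cons.IH[OF sw] by blast
    show ?thesis
      by (rule exI[of _ e'], rule exI[of _ L], rule exI[of _ "max M e"], rule exI[of _ "Suc kb"], rule exI[of _ ps])
        (use H in \<open>unfold eq m, auto\<close>)
  qed
qed

lemma S1:
  assumes "n \<ge> 1" "\<forall>p\<in>set ps. (fst p = 1 \<or> fst p = -1) \<and> snd p \<le> M"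
  shows "\<bar>tsum n ps\<bar> \<le> of_nat (length ps) * (of_nat n) powi M"
  using assms(2)
proof (induction ps)
  case Nil then show ?case by simp
next
  case (Cons p ps)
  have h: "\<bar>of_int (fst p) * (of_nat n::rat) powi (snd p)\<bar> \<le> (of_nat n) powi M"
  proof -
    have "\<bar>of_int (fst p) * (of_nat n::rat) powi (snd p)\<bar> = (of_nat n) powi (snd p)"
      using Cons.prems by (auto simp: abs_mult)
    also have "\<dots> \<le> (of_nat n) powi M"
      using Cons.prems assms(1) by (intro power_int_increasing) auto
    finally show ?thesis .
  qed
  have "\<bar>tsum n ps\<bar> \<le> of_nat (length ps) * (of_nat n) powi M" using Cons by simp
  then show ?case using h by (simp add: algebra_simps)
qed

lemma S2:
  assumes "\<forall>p\<in>set ps. 1 \<le> snd p"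
  shows "\<exists>z::int. tsum n ps = of_nat n * of_int z"
  using assms
proof (induction ps)
  case Nil show ?case by (rule exI[of _ 0]) simp
next
  case (Cons p ps)
  then obtain z where z: "tsum n ps = of_nat n * of_int z" by auto
  have f: "snd p = int (Suc (nat (snd p) - 1))" using Cons.prems by auto
  have "(of_nat n::rat) powi (snd p) = of_nat n * of_nat n ^ (nat (snd p) - 1)"
    by (subst f, simp only: power_int_of_nat power_Suc)
  then show ?case using z
    by (intro exI[of _ "fst p * int n ^ (nat (snd p) - 1) + z"]) (simp add: algebra_simps)
qed

lemma S3:
  assumes n: "n \<ge> 1" and M: "M \<ge> 1" and ps: "\<forall>p\<in>set ps. (fst p = 1 \<or> fst p = -1) \<and> snd p \<le> M"
  shows "(\<exists>z::int. tsum n ps = (of_nat n) powi M * of_int z) \<or>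
         \<bar>tsum n ps\<bar> \<le> of_nat (length ps) * (of_nat n) powi M - ((of_nat n) powi M - (of_nat n) powi (M-1))"
  using ps
proof (induction ps)
  case Nil show ?case by (intro disjI1 exI[of _ 0]) simp
next
  case (Cons p ps)
  have ps': "\<forall>p\<in>set ps. (fst p = 1 \<or> fst p = -1) \<and> snd p \<le> M" using Cons.prems by simp
  have s1: "\<bar>tsum n ps\<bar> \<le> of_nat (length ps) * (of_nat n) powi M" using S1[OF n ps'] .
  have abst: "\<bar>of_int (fst p) * (of_nat n::rat) powi (snd p)\<bar> = (of_nat n) powi (snd p)"
      using Cons.prems by (auto simp: abs_mult)
  show ?case
  proof (cases "snd p = M")
    case True
    from Cons.IH[OF ps'] show ?thesis
    proof
      assume "\<exists>z::int. tsum n ps = (of_nat n) powi M * of_int z"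
      then obtain z where z: "tsum n ps = (of_nat n) powi M * of_int z" by blast
      show ?thesis using True z
        by (intro disjI1 exI[of _ "fst p + z"]) (simp add: algebra_simps)
    next
      assume h: "\<bar>tsum n ps\<bar> \<le> of_nat (length ps) * (of_nat n) powi M - ((of_nat n) powi M - (of_nat n) powi (M-1))"
      have "\<bar>tsum n (p # ps)\<bar> \<le> (of_nat n) powi M + \<bar>tsum n ps\<bar>"
        using abst True by (simp; smt (verit) abs_triangle_ineq)
      then show ?thesis using h by (intro disjI2) (simp add: algebra_simps)
    qed
  next
    case False
    then have "snd p \<le> M - 1" using Cons.prems by auto
    then have "(of_nat n::rat) powi (snd p) \<le> (of_nat n) powi (M-1)"
      using n by (intro power_int_increasing) auto
    then have "\<bar>tsum n (p # ps)\<bar> \<le> (of_nat n) powi (M-1) + of_nat (length ps) * (of_nat n) powi M"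
      using abst s1 by (simp; smt (verit) abs_triangle_ineq)
    then show ?thesis by (intro disjI2) (simp add: algebra_simps)
  qed
qed

lemma pw1: assumes "(n::nat) \<ge> 3" shows "2*d+1 \<le> n^d"
proof (induction d)
  case 0 then show ?case by simp
next
  case (Suc d)
  have "2*Suc d + 1 \<le> 3*(2*d+1)" by simp
  also have "\<dots> \<le> 3*n^d" using Suc.IH by simp
  also have "\<dots> \<le> n^Suc d" using assms by simp
  finally show ?case .
qed

lemma pw2: assumes "(n::nat) \<ge> 3" "m \<ge> 2" shows "2*m+3 \<le> n^m"
proof -
  obtain d where d: "m = d + 2" using assms(2) by (metis add.commute le_Suc_ex)
  have "n^m = n^d * (n*n)" by (simp add: d power_add power2_eq_square)
  also have "\<dots> \<ge> (2*d+1) * 9" using pw1[OF assms(1), of d] assms(1) mult_mono[of 3 n 3 n] by (intro mult_mono) auto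
  finally show ?thesis using d by (simp add: algebra_simps)
qed

lemma ndvd:
  assumes "n \<ge> 2" "m \<ge> 1"
  shows "\<not> int n dvd (int n ^ m + 1)" "\<not> int n dvd (int n ^ m - 1)" "\<not> int n dvd 1"
proof -
  have d: "int n dvd int n ^ m" using assms by (simp add: dvd_power)
  show 3: "\<not> int n dvd 1" using assms by simp
  show "\<not> int n dvd (int n ^ m + 1)" using d 3 dvd_add_right_iff by blast
  show "\<not> int n dvd (int n ^ m - 1)"
  proof
    assume "int n dvd (int n ^ m - 1)"
    then have "int n dvd (int n ^ m - (int n ^ m - 1))" using d dvd_diff by blast
    then show False using 3 by simp
  qed
qed

lemma walk_nat:
  assumes n: "n \<ge> 3" and w: "set w \<subseteq> {bs_a, gA, bs_b n, gB n}"
    and eq: "mulp ((of_nat n)^e1, t1) (wp w) = ((of_nat n)^e2, t2)"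
  shows "\<exists>L M kb ps. t2 = t1 + tsum n ps \<and> L \<le> int e1 \<and> int e1 \<le> M \<and> L \<le> int e2 \<and> int e2 \<le> M
     \<and> kb + length ps = length w \<and> 2*(M-L) - \<bar>int e1 - int e2\<bar> \<le> int kb
     \<and> (\<forall>p\<in>set ps. (fst p = 1 \<or> fst p = -1) \<and> L \<le> snd p \<and> snd p \<le> M)"
proof -
  obtain e' L M kb ps where H: "mulp ((of_nat n) powi (int e1), t1) (wp w) = ((of_nat n) powi e', t1 + tsum n ps)"
     "L \<le> int e1" "int e1 \<le> M" "L \<le> e'" "e' \<le> M" "kb + length ps = length w"
     "2*(M-L) - \<bar>int e1-e'\<bar> \<le> int kb" "\<forall>p\<in>set ps. (fst p = 1 \<or> fst p = -1) \<and> L \<le> snd p \<and> snd p \<le> M"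
    using walk[of n w "int e1" t1] n w by auto
  have pe: "(of_nat n::rat) powi e' = (of_nat n) powi (int e2)" and t2: "t2 = t1 + tsum n ps"
    using H(1) eq by auto
  have g1: "(1::rat) < of_nat n" using n by simp
  have "e' = int e2"
  proof (rule ccontr)
    assume "e' \<noteq> int e2"
    then consider "e' < int e2" | "int e2 < e'" by linarith
    then show False
    proof cases
      case 1 then show False using power_int_strict_increasing[OF 1 g1] pe by simp
    next
      case 2 then show False using power_int_strict_increasing[OF 2 g1] pe by simp
    qed
  qed
  then show ?thesis using H t2 by blast
qed

lemma int_div_contra:
  assumes "(of_nat n::rat) * of_int z = of_int c \<or> (of_nat n::rat) * of_int z = - of_int c" "\<not> int n dvd c"
  shows False
proof -
  have "int n * z = c \<or> int n * z = - c"
  proof -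
    have "(of_int (int n * z)::rat) = of_int c \<or> (of_int (int n * z)::rat) = of_int (- c)" using assms(1) by simp
    then show ?thesis by (simp only: of_int_eq_iff)
  qed
  then have "int n dvd c" by (metis dvd_minus_iff dvd_triv_left)
  then show False using assms(2) by simp
qed

lemma abs_cases_rat: "\<bar>x::rat\<bar> = c \<Longrightarrow> x = c \<or> x = - c"
  by (cases "x \<ge> 0") (simp_all add: abs_if)

lemma lbA:
  assumes n: "n \<ge> 3" and w: "set w \<subseteq> {bs_a, gA, bs_b n, gB n}"
    and eq: "mulp ((of_nat n)^e1, t1) (wp w) = ((of_nat n)^e2, t2)"
  shows "\<bar>int e1 - int e2\<bar> \<le> int (length w)"
proof -
  obtain L M kb ps where H: "t2 = t1 + tsum n ps" "L \<le> int e1" "int e1 \<le> M" "L \<le> int e2" "int e2 \<le> M"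
     "kb + length ps = length w" "2*(M-L) - \<bar>int e1 - int e2\<bar> \<le> int kb"
     "\<forall>p\<in>set ps. (fst p = 1 \<or> fst p = -1) \<and> L \<le> snd p \<and> snd p \<le> M"
    using walk_nat[OF n w eq] by blast
  have H7: "2*M - 2*L - \<bar>int e1 - int e2\<bar> \<le> int kb" using H(7) by (simp add: algebra_simps)
  have "int (length w) = int kb + int (length ps)" using H(6) by simp
  moreover have "\<bar>int e1 - int e2\<bar> \<le> M - L" unfolding abs_le_iff using H(2-5) by linarith
  moreover have "0 \<le> int (length ps)" by simp
  ultimately show ?thesis using H(2-5) H7 by (smt (verit))
qed

lemma lbC:
  assumes n: "n \<ge> 3" and w: "set w \<subseteq> {bs_a, gA, bs_b n, gB n}"
    and eq: "mulp ((of_nat n)^e1, t1) (wp w) = ((of_nat n)^e2, t2)"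
    and d: "\<bar>t2 - t1\<bar> = 1"
  shows "e1 + e2 + 1 \<le> length w"
proof -
  obtain L M kb ps where H: "t2 = t1 + tsum n ps" "L \<le> int e1" "int e1 \<le> M" "L \<le> int e2" "int e2 \<le> M"
     "kb + length ps = length w" "2*(M-L) - \<bar>int e1 - int e2\<bar> \<le> int kb"
     "\<forall>p\<in>set ps. (fst p = 1 \<or> fst p = -1) \<and> L \<le> snd p \<and> snd p \<le> M"
    using walk_nat[OF n w eq] by blast
  have H7: "2*M - 2*L - \<bar>int e1 - int e2\<bar> \<le> int kb" using H(7) by (simp add: algebra_simps)
  have D: "\<bar>tsum n ps\<bar> = 1" using d H(1) by simp
  have ka: "length ps \<ge> 1"
  proof (cases ps)
    case Nil then show ?thesis using D by simp
  qed simp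
  have L0: "L \<le> 0"
  proof (rule ccontr)
    assume "\<not> L \<le> 0"
    then have "\<forall>p\<in>set ps. 1 \<le> snd p"
    proof (intro ballI)
      fix p assume "\<not> L \<le> 0" "p \<in> set ps"
      then show "1 \<le> snd p" using H(8) by fastforce
    qed
    then obtain z where z: "tsum n ps = of_nat n * of_int z" using S2 by blast
    have "(of_nat n::rat) * of_int z = of_int 1 \<or> (of_nat n::rat) * of_int z = - of_int 1"
      using abs_cases_rat[OF D] z by simp
    then show False using int_div_contra[of n z 1] ndvd(3)[of n 1] n by simp
  qed
  have "int (length w) = int kb + int (length ps)" using H(6) by simp
  moreover have "\<bar>int e1 - int e2\<bar> \<le> 2*M - int e1 - int e2" unfolding abs_le_iff using H(2-5) by linarith
  moreover have "1 \<le> int (length ps)" using ka by simp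
  ultimately have "int e1 + int e2 + 1 \<le> int (length w)" using H(2-5) H7 L0 by (smt (verit))
  then show ?thesis by simp
qed

lemma ka_bound:
  assumes n: "n \<ge> 3" and Mm: "M' < m" and h: "n^m < ka * n^M'"
  shows "2*(m-M')+2 \<le> ka"
proof -
  have "n^m = n^(m-M') * n^M'" using Mm by (simp add: power_add[symmetric])
  then have "n^(m-M') < ka" using h by simp
  moreover have "2*(m-M')+1 \<le> n^(m-M')" using pw1[OF n] .
  ultimately show ?thesis by linarith
qed

lemma ka_bound_le:
  assumes n: "n \<ge> 3" and Mm: "M' < m" and h: "n^m \<le> ka * n^M'"
  shows "2*(m-M')+1 \<le> ka"
proof -
  have "n^m = n^(m-M') * n^M'" using Mm by (simp add: power_add[symmetric])
  then have "n^(m-M') \<le> ka" using h n by simp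
  moreover have "2*(m-M')+1 \<le> n^(m-M')" using pw1[OF n] .
  ultimately show ?thesis by linarith
qed

lemma lbB:
  assumes n: "n \<ge> 3" and w: "set w \<subseteq> {bs_a, gA, bs_b n, gB n}"
    and eq: "mulp ((of_nat n)^e1, t1) (wp w) = ((of_nat n)^e2, t2)"
    and d: "\<bar>t2 - t1\<bar> = (of_nat n)^m" and e1: "e1 \<le> m" and e2: "e2 \<le> m"
  shows "2*m+1 \<le> length w + e1 + e2"
proof -
  obtain L M kb ps where H: "t2 = t1 + tsum n ps" "L \<le> int e1" "int e1 \<le> M" "L \<le> int e2" "int e2 \<le> M"
     "kb + length ps = length w" "2*(M-L) - \<bar>int e1 - int e2\<bar> \<le> int kb"
     "\<forall>p\<in>set ps. (fst p = 1 \<or> fst p = -1) \<and> L \<le> snd p \<and> snd p \<le> M"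
    using walk_nat[OF n w eq] by blast
  have H7: "2*M - 2*L - \<bar>int e1 - int e2\<bar> \<le> int kb" using H(7) by (simp add: algebra_simps)
  have D: "\<bar>tsum n ps\<bar> = (of_nat n)^m" using d H(1) by simp
  have ka: "length ps \<ge> 1"
  proof (cases ps)
    case Nil then show ?thesis using D n by simp
  qed simp
  have ab: "\<bar>int e1 - int e2\<bar> \<le> int e1 + int e2 - 2*L" unfolding abs_le_iff using H(2-5) by linarith
  have key: "int (2*m+1) \<le> int kb + int (length ps) + int e1 + int e2"
  proof (cases "M \<ge> int m")
    case True
    have "1 \<le> int (length ps)" using ka by simp
    then show ?thesis using ab H7 True by simp
  next
    case False
    define M' where "M' = nat M"
    have MM: "M = int M'" using H(3) by (simp add: M'_def)
    have Mm: "M' < m" using False MM by simp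
    have s1: "\<bar>tsum n ps\<bar> \<le> of_nat (length ps) * (of_nat n) powi M"
      using S1[of n ps M] n H(8) by auto
    then have "(of_nat (n^m)::rat) \<le> of_nat (length ps * n^M')" using D MM by simp
    then have "n^m \<le> length ps * n^M'" by (simp only: of_nat_le_iff)
    then have "2*(m-M')+1 \<le> length ps" using ka_bound_le[OF n Mm] by simp
    then have "int (2*(m-M')+1) \<le> int (length ps)" by simp
    then have "2*int m - 2*int M' + 1 \<le> int (length ps)" using Mm by simp
    then have "2*int m + 1 \<le> int kb + int (length ps) + int e1 + int e2" using ab H7 MM by linarith
    then show ?thesis by simp
  qed
  then show ?thesis using H(6) by simp
qed

lemma lbD:
  assumes n: "n \<ge> 3" and w: "set w \<subseteq> {bs_a, gA, bs_b n, gB n}"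
    and eq: "mulp ((of_nat n)^e1, t1) (wp w) = ((of_nat n)^e2, t2)"
    and d: "\<bar>t2 - t1\<bar> = (of_nat n)^m + 1 \<or> \<bar>t2 - t1\<bar> = (of_nat n)^m - 1"
    and m2: "m \<ge> 2" and e1: "e1 \<le> m" and e2: "e2 \<le> m"
  shows "int (2*m+2) \<le> int (length w) + \<bar>int e1 - int e2\<bar>"
proof -
  obtain L M kb ps where H: "t2 = t1 + tsum n ps" "L \<le> int e1" "int e1 \<le> M" "L \<le> int e2" "int e2 \<le> M"
     "kb + length ps = length w" "2*(M-L) - \<bar>int e1 - int e2\<bar> \<le> int kb"
     "\<forall>p\<in>set ps. (fst p = 1 \<or> fst p = -1) \<and> L \<le> snd p \<and> snd p \<le> M"
    using walk_nat[OF n w eq] by blast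
  have H7: "2*M - 2*L - \<bar>int e1 - int e2\<bar> \<le> int kb" using H(7) by (simp add: algebra_simps)
  have D: "\<bar>tsum n ps\<bar> = (of_nat n)^m + 1 \<or> \<bar>tsum n ps\<bar> = (of_nat n)^m - 1" using d H(1) by simp
  have pw: "2*m+3 \<le> n^m" using pw2[OF n m2] .
  then have "(of_nat (2*m+3)::rat) \<le> of_nat (n^m)" by (simp only: of_nat_le_iff)
  then have nm: "(7::rat) \<le> (of_nat n)^m" using m2 by simp
  have m1: "m \<ge> 1" using m2 by simp
  have nocontra: False if z: "tsum n ps = of_nat n * of_int z" for z
  proof -
    from D show False
    proof
      assume h: "\<bar>tsum n ps\<bar> = (of_nat n)^m + 1"
      have "(of_nat n::rat) * of_int z = of_int (int n ^ m + 1) \<or> (of_nat n::rat) * of_int z = - of_int (int n ^ m + 1)"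
        using abs_cases_rat[OF h] z by simp
      then show False using int_div_contra ndvd(1)[OF _ m1, of n] n by force
    next
      assume h: "\<bar>tsum n ps\<bar> = (of_nat n)^m - 1"
      have "(of_nat n::rat) * of_int z = of_int (int n ^ m - 1) \<or> (of_nat n::rat) * of_int z = - of_int (int n ^ m - 1)"
        using abs_cases_rat[OF h] z by simp
      then show False using int_div_contra ndvd(2)[OF _ m1, of n] n by force
    qed
  qed
  have L0: "L \<le> 0"
  proof (rule ccontr)
    assume "\<not> L \<le> 0"
    then have "\<forall>p\<in>set ps. 1 \<le> snd p"
    proof (intro ballI)
      fix p assume "\<not> L \<le> 0" "p \<in> set ps"
      then show "1 \<le> snd p" using H(8) by fastforce
    qed
    then obtain z where z: "tsum n ps = of_nat n * of_int z" using S2 by blast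
    then show False using nocontra by blast
  qed
  have D6: "6 \<le> \<bar>tsum n ps\<bar>" using D nm by auto
  have key: "int (2*m+2) \<le> int kb + int (length ps) + \<bar>int e1 - int e2\<bar>"
  proof (cases "M \<ge> int m")
    case True
    have ka: "length ps \<ge> 2"
    proof (rule ccontr)
      assume "\<not> length ps \<ge> 2"
      then consider "ps = []" | p where "ps = [p]"
      proof (cases ps)
        case (Cons p rest)
        then have "rest = []" using \<open>\<not> length ps \<ge> 2\<close> by (cases rest) auto
        then show ?thesis using Cons that(2) by blast
      qed
      then show False
      proof cases
        case 1 then show False using D6 by simp
      next
        case 2
        have sp: "fst p = 1 \<or> fst p = -1" using H(8) 2 by simp
        have A: "\<bar>tsum n ps\<bar> = (of_nat n) powi (snd p)" using 2 sp by auto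
        show False
        proof (cases "snd p \<le> 0")
          case True
          then have "(of_nat n::rat) powi (snd p) \<le> (of_nat n) powi 0"
            using n by (intro power_int_increasing) auto
          then show False using A D6 by simp
        next
          case False
          define f where "f = nat (snd p)"
          have f: "snd p = int f" "f \<ge> 1" using False by (auto simp: f_def)
          have dv: "int n dvd int n ^ f" using f(2) by (simp add: dvd_power)
          have A': "\<bar>tsum n ps\<bar> = of_int (int n ^ f)" using A f by simp
          from D show False
          proof
            assume h: "\<bar>tsum n ps\<bar> = (of_nat n)^m + 1"
            then have "(of_int (int n ^ f)::rat) = of_int (int n ^ m + 1)" using A' by simp
            then have "int n ^ f = int n ^ m + 1" by (simp only: of_int_eq_iff)
            then show False using dv ndvd(1)[OF _ m1, of n] n by simp
          next
            assume h: "\<bar>tsum n ps\<bar> = (of_nat n)^m - 1"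
            then have "(of_int (int n ^ f)::rat) = of_int (int n ^ m - 1)" using A' by simp
            then have "int n ^ f = int n ^ m - 1" by (simp only: of_int_eq_iff)
            then show False using dv ndvd(2)[OF _ m1, of n] n by simp
          qed
        qed
      qed
    qed
    then have "2 \<le> int (length ps)" by simp
    then have "2*int m + 2 \<le> int kb + int (length ps) + \<bar>int e1 - int e2\<bar>" using True H7 L0 by linarith
    then show ?thesis by simp
  next
    case False
    define M' where "M' = nat M"
    have MM: "M = int M'" using H(3) by (simp add: M'_def)
    have Mm: "M' < m" using False MM by simp
    have s1: "\<bar>tsum n ps\<bar> \<le> of_nat (length ps) * (of_nat n)^M'"
      using S1[of n ps M] n H(8) MM by auto
    have kab: "2*(m-M')+2 \<le> length ps"
    proof -
      have lt: "n^m < length ps * n^M'" if hh: "(of_nat n::rat)^m + 1 \<le> of_nat (length ps) * (of_nat n)^M'"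
      proof -
        have "(of_nat (n^m + 1)::rat) \<le> of_nat (length ps * n^M')" using hh by simp
        then have "n^m + 1 \<le> length ps * n^M'" by (simp only: of_nat_le_iff)
        then show ?thesis by simp
      qed
      from D show ?thesis
      proof
        assume h: "\<bar>tsum n ps\<bar> = (of_nat n)^m + 1"
        show ?thesis using ka_bound[OF n Mm lt] h s1 by simp
      next
        assume h: "\<bar>tsum n ps\<bar> = (of_nat n)^m - 1"
        show ?thesis
        proof (cases "M' = 0")
          case True
          have "(of_nat (n^m)::rat) \<le> of_nat (length ps + 1)" using h s1 True by simp
          then have "n^m \<le> length ps + 1" by (simp only: of_nat_le_iff)
          then show ?thesis using pw True by simp
        next
          case False
          have M1: "M \<ge> 1" using False MM by simp
          have pm: "(of_nat n::rat) powi (M - 1) = (of_nat n)^(M'-1)"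
          proof -
            have "M - 1 = int (M' - 1)" using MM False by simp
            then show ?thesis by simp
          qed
          have pM: "(of_nat n::rat) powi M = of_nat n * (of_nat n)^(M'-1)"
          proof -
            have "M = int (Suc (M' - 1))" using MM False by simp
            then show ?thesis by (simp only: power_int_of_nat power_Suc)
          qed
          have S3r: "(\<exists>z::int. tsum n ps = (of_nat n) powi M * of_int z) \<or>
             \<bar>tsum n ps\<bar> \<le> of_nat (length ps) * (of_nat n) powi M - ((of_nat n) powi M - (of_nat n) powi (M-1))"
            using S3[of n M ps] n M1 H(8) by auto
          from S3r show ?thesis
          proof
            assume "\<exists>z::int. tsum n ps = (of_nat n) powi M * of_int z"
            then obtain z where "tsum n ps = (of_nat n) powi M * of_int z" by blast
            then have "tsum n ps = of_nat n * of_int (int n ^ (M'-1) * z)" using pM by simp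
            then show ?thesis using nocontra by blast
          next
            assume h3: "\<bar>tsum n ps\<bar> \<le> of_nat (length ps) * (of_nat n) powi M - ((of_nat n) powi M - (of_nat n) powi (M-1))"
            have "(of_nat n::rat) * (of_nat n)^(M'-1) \<ge> 3 * (of_nat n)^(M'-1)" using n
              by (intro mult_right_mono) auto
            moreover have "(1::rat) \<le> (of_nat n)^(M'-1)" using n by simp
            ultimately have "(of_nat n::rat)^m + 1 \<le> of_nat (length ps) * (of_nat n)^M'"
              using h3 h pm pM MM by (simp; smt (verit))
            then show ?thesis using ka_bound[OF n Mm lt] by simp
          qed
        qed
      qed
    qed
    then have "int (2*(m-M')+2) \<le> int (length ps)" by simp
    then have "2*int m - 2*int M' + 2 \<le> int (length ps)" using Mm by simp
    then have "2*int m + 2 \<le> int kb + int (length ps) + \<bar>int e1 - int e2\<bar>" using H7 MM L0 H(3,5) by linarith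
    then show ?thesis by simp
  qed
  then show ?thesis using H(6) by simp
qed

definition cf :: "nat \<Rightarrow> nat \<Rightarrow> nat \<Rightarrow> rat \<times> rat" where
  "cf n m x = (if x < m then bs_b n else if x = m then bs_a else if x < 2*m+1 then gB n
     else if x = 2*m+1 then bs_a else if x < 3*m+2 then bs_b n else if x = 3*m+2 then gA
     else if x < 4*m+3 then gB n else gA)"

definition cw :: "nat \<Rightarrow> nat \<Rightarrow> (rat \<times> rat) list" where
  "cw n m = map (cf n m) [0..<4*m+4]"

definition lev :: "nat \<Rightarrow> nat \<Rightarrow> nat" where
  "lev m x = (if x \<le> m then x else if x \<le> 2*m+1 then 2*m+1-x else if x \<le> 3*m+2 then x-(2*m+2)
     else if x \<le> 4*m+3 then 4*m+3-x else 0)"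

definition tv :: "nat \<Rightarrow> nat \<Rightarrow> nat \<Rightarrow> rat" where
  "tv n m x = (if x \<le> m then 0 else if x \<le> 2*m+1 then (of_nat n)^m else if x \<le> 3*m+2 then (of_nat n)^m + 1
     else if x \<le> 4*m+3 then 1 else 0)"

lemma cw_len[simp]: "length (cw n m) = 4*m+4" by (simp add: cw_def)

lemma cw_set: "set (cw n m) \<subseteq> {bs_a, gA, bs_b n, gB n}"
  by (auto simp: cw_def cf_def)

lemma vert:
  assumes n: "n \<ge> 1" and x: "x \<le> 4*m+4"
  shows "wp (take x (cw n m)) = ((of_nat n)^(lev m x), tv n m x)"
  using x
proof (induction x)
  case 0 then show ?case by (simp add: lev_def tv_def)
next
  case (Suc x)
  have xl: "x < 4*m+4" using Suc.prems by simp
  have tk: "take (Suc x) (cw n m) = take x (cw n m) @ [cf n m x]"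
    using xl by (simp add: take_Suc_conv_app_nth cw_def)
  have IH: "wp (take x (cw n m)) = ((of_nat n)^(lev m x), tv n m x)" using Suc xl by simp
  have eq: "wp (take (Suc x) (cw n m)) = mulp ((of_nat n)^(lev m x), tv n m x) (cf n m x)"
    by (simp add: tk wp_append IH)
  have N0: "(of_nat n::rat) \<noteq> 0" using n by simp
  have nz: "n \<noteq> 0" using n by simp
  have pd: "(of_nat n::rat)^l * (1 / of_nat n) = (of_nat n)^(l - 1)" if "l \<ge> 1" for l
  proof -
    have "l = Suc (l - 1)" using that by simp
    then have "(of_nat n::rat)^l = of_nat n * (of_nat n)^(l-1)" by (metis power_Suc)
    then show ?thesis using N0 by simp
  qed
  consider "x < m" | "x = m" | "m < x" "x < 2*m+1" | "x = 2*m+1" | "2*m+1 < x" "x < 3*m+2"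
    | "x = 3*m+2" | "3*m+2 < x" "x < 4*m+3" | "x = 4*m+3" using xl by linarith
  then show ?case
  proof cases
    case 1 then show ?thesis unfolding eq by (simp add: cf_def lev_def tv_def bs_b_def mulp_def)
  next
    case 2 then show ?thesis unfolding eq by (simp add: cf_def lev_def tv_def bs_a_def mulp_def)
  next
    case 3
    have l: "lev m x = Suc (2*m-x)" "lev m (Suc x) = 2*m-x" "tv n m x = (of_nat n)^m" "tv n m (Suc x) = (of_nat n)^m"
      using 3 by (auto simp: lev_def tv_def)
    have c: "cf n m x = gB n" using 3 by (simp add: cf_def)
    show ?thesis unfolding eq using 3 by (simp add: l c gB_def mulp_def N0 nz)
  next
    case 4 then show ?thesis unfolding eq by (simp add: cf_def lev_def tv_def bs_a_def mulp_def)
  next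
    case 5
    have l: "lev m x = x-(2*m+2)" "lev m (Suc x) = Suc (x-(2*m+2))" "tv n m x = (of_nat n)^m + 1" "tv n m (Suc x) = (of_nat n)^m + 1"
      using 5 by (auto simp: lev_def tv_def)
    have c: "cf n m x = bs_b n" using 5 by (simp add: cf_def)
    show ?thesis unfolding eq by (simp add: l c bs_b_def mulp_def)
  next
    case 6 then show ?thesis unfolding eq by (simp add: cf_def lev_def tv_def gA_def mulp_def)
  next
    case 7
    have l: "lev m x = Suc (4*m+2-x)" "lev m (Suc x) = 4*m+2-x" "tv n m x = 1" "tv n m (Suc x) = 1"
      using 7 by (auto simp: lev_def tv_def)
    have c: "cf n m x = gB n" using 7 by (simp add: cf_def)
    show ?thesis unfolding eq using 7 by (simp add: l c gB_def mulp_def N0 nz)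
  next
    case 8 then show ?thesis unfolding eq by (simp add: cf_def lev_def tv_def gA_def mulp_def)
  qed
qed

lemma key:
  assumes n: "n \<ge> 3" and m2: "m \<ge> 2" and xy: "x < y" and yN: "y \<le> 4*m+4"
    and nx: "\<not> (x = 0 \<and> y = 4*m+4)" and w: "set w \<subseteq> {bs_a, gA, bs_b n, gB n}"
    and eq: "wp (take y (cw n m)) = mulp (wp (take x (cw n m))) (wp w)"
  shows "min (y - x) (4*m+4 - (y-x)) \<le> length w"
proof -
  have n1: "n \<ge> 1" using n by simp
  have e: "mulp ((of_nat n)^(lev m x), tv n m x) (wp w) = ((of_nat n)^(lev m y), tv n m y)"
    using eq vert[OF n1, of x m] vert[OF n1, of y m] xy yN by simp
  have lx: "lev m x \<le> m" and ly: "lev m y \<le> m" by (auto simp: lev_def)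
  note A = lbA[OF n w e]
  have B: "2*m+1 \<le> length w + lev m x + lev m y" if "\<bar>tv n m y - tv n m x\<bar> = (of_nat n)^m"
    using lbB[OF n w e that lx ly] .
  have C: "lev m x + lev m y + 1 \<le> length w" if "\<bar>tv n m y - tv n m x\<bar> = 1"
    using lbC[OF n w e that] .
  have D: "int (2*m+2) \<le> int (length w) + \<bar>int (lev m x) - int (lev m y)\<bar>"
    if "\<bar>tv n m y - tv n m x\<bar> = (of_nat n)^m + 1 \<or> \<bar>tv n m y - tv n m x\<bar> = (of_nat n)^m - 1"
    using lbD[OF n w e that m2 lx ly] .
  have pos: "(1::rat) \<le> (of_nat n)^m" using n by simp
  have ab1: "\<bar>1 - (of_nat n::rat)^m\<bar> = (of_nat n)^m - 1" using pos by simp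
  have ab2: "\<bar>0 - ((of_nat n::rat)^m + 1)\<bar> = (of_nat n)^m + 1" using pos by simp
  have ab3: "\<bar>1 - ((of_nat n::rat)^m + 1)\<bar> = (of_nat n)^m" using pos by simp
  let ?L = "length w"
  have x3: "x \<le> 4*m+3" using xy yN by simp
  consider "x \<le> m" | "m < x" "x \<le> 2*m+1" | "2*m+1 < x" "x \<le> 3*m+2" | "3*m+2 < x" "x \<le> 4*m+3"
    using x3 by linarith
  note xc = this
  consider "y \<le> m" | "m < y" "y \<le> 2*m+1" | "2*m+1 < y" "y \<le> 3*m+2" | "3*m+2 < y" "y \<le> 4*m+3" | "y = 4*m+4"
    using yN by linarith
  note yc = this
  show ?thesis
  proof (cases rule: xc[case_product yc])
    case "1_1"
    then have "\<bar>int (lev m x) - int (lev m y)\<bar> = int (y - x)" using xy by (simp add: lev_def)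
    then show ?thesis using A by simp
  next
    case "1_2"
    then have "2*m+1 \<le> ?L + x + (2*m+1-y)" using B by (simp add: lev_def tv_def)
    then show ?thesis using "1_2" by simp
  next
    case "1_3"
    then have "int (2*m+2) \<le> int ?L + \<bar>int x - int (y - (2*m+2))\<bar>" using D by (simp add: lev_def tv_def)
    then show ?thesis using "1_3" by (simp add: min_le_iff_disj; arith)
  next
    case "1_4"
    then have "x + (4*m+3-y) + 1 \<le> ?L" using C by (simp add: lev_def tv_def)
    then show ?thesis using "1_4" by (simp add: min_le_iff_disj)
  next
    case "1_5"
    then have "\<bar>int x - 0\<bar> \<le> int ?L" using A by (simp add: lev_def)
    then show ?thesis using "1_5" by (simp add: min_le_iff_disj)
  next
    case "2_1" then show ?thesis using xy by simp
  next
    case "2_2"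
    then have "\<bar>int (lev m x) - int (lev m y)\<bar> = int (y - x)" using xy by (simp add: lev_def)
    then show ?thesis using A by simp
  next
    case "2_3"
    then have "(2*m+1-x) + (y-(2*m+2)) + 1 \<le> ?L" using C by (simp add: lev_def tv_def)
    then show ?thesis using "2_3" by (simp add: min_le_iff_disj)
  next
    case "2_4"
    then have "int (2*m+2) \<le> int ?L + \<bar>int (2*m+1-x) - int (4*m+3-y)\<bar>" using D ab1 by (simp add: lev_def tv_def)
    then show ?thesis using "2_4" by (simp add: min_le_iff_disj; arith)
  next
    case "2_5"
    then have "2*m+1 \<le> ?L + (2*m+1-x)" using B by (simp add: lev_def tv_def)
    then show ?thesis using "2_5" by (simp add: min_le_iff_disj)
  next
    case "3_1" then show ?thesis using xy by simp
  next
    case "3_2" then show ?thesis using xy by simp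
  next
    case "3_3"
    then have "\<bar>int (lev m x) - int (lev m y)\<bar> = int (y - x)" using xy by (simp add: lev_def)
    then show ?thesis using A by simp
  next
    case "3_4"
    then have "2*m+1 \<le> ?L + (x-(2*m+2)) + (4*m+3-y)" using B ab3 by (simp add: lev_def tv_def)
    then show ?thesis using "3_4" by (simp add: min_le_iff_disj)
  next
    case "3_5"
    then have "int (2*m+2) \<le> int ?L + \<bar>int (x-(2*m+2)) - 0\<bar>" using D ab2 by (simp add: lev_def tv_def)
    then show ?thesis using "3_5" by (simp add: min_le_iff_disj; arith)
  next
    case "4_1" then show ?thesis using xy by simp
  next
    case "4_2" then show ?thesis using xy by simp
  next
    case "4_3" then show ?thesis using xy by simp
  next
    case "4_4"
    then have "\<bar>int (lev m x) - int (lev m y)\<bar> = int (y - x)" using xy by (simp add: lev_def)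
    then show ?thesis using A by simp
  next
    case "4_5"
    then have "(4*m+3-x) + 0 + 1 \<le> ?L" using C by (simp add: lev_def tv_def)
    then show ?thesis using "4_5" by (simp add: min_le_iff_disj)
  qed
qed

lemma take_split:
  assumes "1 \<le> p" "p \<le> q" "q \<le> length ws"
  shows "take q ws = take (p-1) ws @ subword ws p q"
proof -
  have "q = (p - 1) + (Suc q - p)" using assms by simp
  then have "take q ws = take ((p - 1) + (Suc q - p)) ws" by simp
  also have "\<dots> = take (p-1) ws @ take (Suc q - p) (drop (p-1) ws)" by (rule take_add)
  finally show ?thesis by (simp add: subword_def)
qed

lemma wp_full: "n \<ge> 1 \<Longrightarrow> wp (cw n m) = (1, 0)"
  using vert[of n "4*m+4" m] by (simp add: lev_def tv_def)

theorem theorem13: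
  fixes n k :: nat
  assumes "n > 2" and "k > 0"
  shows "\<not> k_chordal (BS n) {bs_a, bs_b n} k"
proof
  assume kc: "k_chordal (BS n) {bs_a, bs_b n} k"
  have n: "n \<ge> 3" using assms(1) by simp
  have n1: "n \<ge> 1" "n > 1" using n by simp_all
  define m where "m = k + 2"
  have m2: "m \<ge> 2" by (simp add: m_def)
  define ws where "ws = cw n m"
  have len: "length ws = 4*m+4" by (simp add: ws_def)
  have sg: "sym_gens (BS n) {bs_a, bs_b n} = {bs_a, gA, bs_b n, gB n}" using sym_gens_BS[OF n1(2)] .
  have simple: "simple_relation (BS n) {bs_a, bs_b n} ws"
    unfolding simple_relation_def
  proof (intro conjI allI impI)
    show "length ws > 2" using len by simp
    show "set ws \<subseteq> sym_gens (BS n) {bs_a, bs_b n}" using cw_set sg by (simp add: ws_def)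
    fix p q assume pq: "1 \<le> p \<and> p \<le> q \<and> q \<le> length ws"
    have ts: "wp (take q ws) = mulp (wp (take (p-1) ws)) (wp (subword ws p q))"
      using take_split[of p q ws] pq by (simp add: wp_append)
    show "(word_prod (BS n) (subword ws p q) = \<one>\<^bsub>BS n\<^esub>) = (p = 1 \<and> q = length ws)"
    proof
      assume "word_prod (BS n) (subword ws p q) = \<one>\<^bsub>BS n\<^esub>"
      then have "wp (subword ws p q) = wp []" by (simp add: word_prod_BS)
      then have e: "wp (take q (cw n m)) = mulp (wp (take (p-1) (cw n m))) (wp [])" using ts by (simp add: ws_def)
      show "p = 1 \<and> q = length ws"
      proof (rule ccontr)
        assume "\<not> (p = 1 \<and> q = length ws)"
        then have nx: "\<not> (p - 1 = 0 \<and> q = 4*m+4)" using pq len by auto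
        have lt: "p - 1 < q" using pq by arith
        have "min (q - (p-1)) (4*m+4 - (q-(p-1))) \<le> length ([] :: (rat \<times> rat) list)"
          using key[OF n m2 lt _ nx _ e] pq len by simp
        then show False using pq len nx by (simp add: min_le_iff_disj) arith
      qed
    next
      assume "p = 1 \<and> q = length ws"
      then show "word_prod (BS n) (subword ws p q) = \<one>\<^bsub>BS n\<^esub>"
        using wp_full[OF n1(1), of m] len by (simp add: word_prod_BS subword_def ws_def)
    qed
  qed
  have "length ws \<ge> k" using len by (simp add: m_def)
  then obtain i j ws' where H: "1 \<le> i" "i < j" "j \<le> length ws" "set ws' \<subseteq> sym_gens (BS n) {bs_a, bs_b n}"
     "word_prod (BS n) (subword ws i j) = word_prod (BS n) ws'"
     "int (length ws') \<le> min (int j - int i) (int (length ws) - int j + int i - 2)"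
    using kc simple unfolding k_chordal_def by blast
  have w: "set ws' \<subseteq> {bs_a, gA, bs_b n, gB n}" using H(4) sg by simp
  have ts: "wp (take j ws) = mulp (wp (take (i-1) ws)) (wp (subword ws i j))"
    using take_split[of i j ws] H(1-3) by (simp add: wp_append)
  then have e: "wp (take j (cw n m)) = mulp (wp (take (i-1) (cw n m))) (wp ws')"
    using H(5) by (simp add: word_prod_BS ws_def)
  show False
  proof (cases "i - 1 = 0 \<and> j = 4*m+4")
    case True
    then show False using H(6) len by simp
  next
    case False
    have "min (j - (i-1)) (4*m+4 - (j-(i-1))) \<le> length ws'"
      using key[OF n m2 _ _ False w e] H(1-3) len by (simp; arith)
    then show False using H(1-3,6) len by (simp add: min_le_iff_disj; arith)
  qed
qed

end
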